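(* Let $\mathcal{M}$ be an $L5$-model and let $\gamma\colon V\to M$ be an assignment in $\mathcal{M}$. Then there exist an $L5$-frame $(W,R)$, an $R$-maximal world $w_T\in W$ and an assignment $g\colon V\to\mathrm{Pow}(W)$ in $(W,R)$ such that for all formulas $\varphi$: $$(\mathcal{M},\gamma)\vDash\varphi \iff (w_T,g)\vDash\varphi.$$
   Context: Formulas are built from a countable set $V$ of propositional variables using $\wedge,\vee,\rightarrow,\bot$ and the unary modal operator $\square$; $\top$ abbreviates $\bot\rightarrow\bot$. An $L5$-model is a structure $\mathcal{M}=(M,\mathit{TRUE},f_\bot,f_\top,f_\rightarrow,f_\vee,f_\wedge,f_\square)$ such that $(M,f_\bot,f_\top,f_\rightarrow,f_\vee,f_\wedge)$ is a Heyting algebra (bottom $f_\bot$, top $f_\top$, relative pseudo-complement $f_\rightarrow$, lattice order $\le$). Moreover, $\mathit{TRUE}\subseteq M$ is an ultrafilter, and $f_\square\colon M\to M$ satisfies, for all $m,m',m''\in M$: (i) $f_\square(m)\le m$; (ii) $f_\square(f_\rightarrow(m,m'))\le f_\rightarrow(f_\square(f_\rightarrow(m',m'')),f_\square(f_\rightarrow(m,m'')))$; (iii) $f_\square(f_\vee(m,m'))\le f_\vee(f_\square(m),f_\square(m'))$; (iv) $f_\square(m)\in\mathit{TRUE}$ iff $m=f_\top$; (v) $f_\square(m)=f_\top$ if $m=f_\top$, and $f_\square(m)=f_\bot$ otherwise. An assignment $\gamma\colon V\to M$ extends to all formulas by: - $\gamma(\bot)=f_\bot$; - $\gamma(\square\varphi)=f_\square(\gamma(\varphi))$;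 - $\gamma(\varphi*\psi)=f_*(\gamma(\varphi),\gamma(\psi))$ for $*\in\{\vee,\wedge,\rightarrow\}$. Satisfaction is $(\mathcal{M},\gamma)\vDash\varphi$ iff $\gamma(\varphi)\in\mathit{TRUE}$. An $L5$-frame is a pair $(W,R)$ with the following properties: - $W$ is a non-empty set; - $R$ is a partial order on $W$; - there is an $R$-smallest element $w_B$; - every $R$-chain has an upper bound in $W$. An assignment in $(W,R)$ is a map $g\colon V\to\mathrm{Pow}(W)$ with $wRw'$ and $w\in g(x)$ implying $w'\in g(x)$. Kripke satisfaction is defined as follows: - $(w,g)\nvDash\bot$; - $(w,g)\vDash x$ iff $w\in g(x)$; - $\vee,\wedge$ are evaluated pointwise; - $(w,g)\vDash\varphi\rightarrow\psi$ iff for all $w'$ with $wRw'$, $(w',g)\vDash\varphi$ implies $(w',g)\vDash\psi$; - $(w,g)\vDash\square\varphi$ iff $(w_B,g)\vDash\varphi$. *)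

theory Defs
  imports Main
begin

datatype fm =
    Var nat
  | Bot
  | And fm fm
  | Or fm fm
  | Imp fm fm
  | Box fm

definition Top :: fm where "Top = Imp Bot Bot"

record 'm L5model =
  carrier :: "'m set"
  TRUE :: "'m set"
  fbot :: 'm
  ftop :: 'm
  fimp :: "'m \<Rightarrow> 'm \<Rightarrow> 'm"
  fvee :: "'m \<Rightarrow> 'm \<Rightarrow> 'm"
  fwedge :: "'m \<Rightarrow> 'm \<Rightarrow> 'm"
  fbox :: "'m \<Rightarrow> 'm"

definition le :: "('m, 'z) L5model_scheme \<Rightarrow> 'm \<Rightarrow> 'm \<Rightarrow> bool" where
  "le A a b \<longleftrightarrow> fwedge A a b = a"

definition heyting_algebra :: "('m, 'z) L5model_scheme \<Rightarrow> bool" where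
  "heyting_algebra A \<longleftrightarrow>
     (let M = carrier A in
      fbot A \<in> M \<and> ftop A \<in> M \<and>
      (\<forall>a\<in>M. \<forall>b\<in>M. fimp A a b \<in> M \<and> fvee A a b \<in> M \<and> fwedge A a b \<in> M) \<and>
      (\<forall>a\<in>M. \<forall>b\<in>M. \<forall>c\<in>M.
          fwedge A (fwedge A a b) c = fwedge A a (fwedge A b c) \<and>
          fvee A (fvee A a b) c = fvee A a (fvee A b c)) \<and>
      (\<forall>a\<in>M. \<forall>b\<in>M.
          fwedge A a b = fwedge A b a \<and> fvee A a b = fvee A b a \<and>
          fwedge A a (fvee A a b) = a \<and> fvee A a (fwedge A a b) = a) \<and>
      (\<forall>a\<in>M. le A (fbot A) a \<and> le A a (ftop A)) \<and>
      (\<forall>a\<in>M. \<forall>b\<in>M. \<forall>c\<in>M. le A c (fimp A a b) \<longleftrightarrow> le A (fwedge A c a) b))"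

definition is_filter :: "('m, 'z) L5model_scheme \<Rightarrow> 'm set \<Rightarrow> bool" where
  "is_filter A F \<longleftrightarrow> F \<subseteq> carrier A \<and> F \<noteq> {} \<and>
     (\<forall>a\<in>F. \<forall>b\<in>carrier A. le A a b \<longrightarrow> b \<in> F) \<and>
     (\<forall>a\<in>F. \<forall>b\<in>F. fwedge A a b \<in> F)"

definition proper_filter :: "('m, 'z) L5model_scheme \<Rightarrow> 'm set \<Rightarrow> bool" where
  "proper_filter A F \<longleftrightarrow> is_filter A F \<and> fbot A \<notin> F"

definition ultrafilter :: "('m, 'z) L5model_scheme \<Rightarrow> 'm set \<Rightarrow> bool" where
  "ultrafilter A F \<longleftrightarrow> proper_filter A F \<and>
     (\<forall>G. proper_filter A G \<and> F \<subseteq> G \<longrightarrow> G = F)"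

definition L5_model :: "('m, 'z) L5model_scheme \<Rightarrow> bool" where
  "L5_model A \<longleftrightarrow> heyting_algebra A \<and> ultrafilter A (TRUE A) \<and>
     (\<forall>m\<in>carrier A. fbox A m \<in> carrier A) \<and>
     (\<forall>m\<in>carrier A. \<forall>m'\<in>carrier A. \<forall>m''\<in>carrier A.
        le A (fbox A m) m \<and>
        le A (fbox A (fimp A m m'))
             (fimp A (fbox A (fimp A m' m'')) (fbox A (fimp A m m''))) \<and>
        le A (fbox A (fvee A m m')) (fvee A (fbox A m) (fbox A m')) \<and>
        (fbox A m \<in> TRUE A \<longleftrightarrow> m = ftop A) \<and>
        fbox A m = (if m = ftop A then ftop A else fbot A))"

primrec eval :: "('m, 'z) L5model_scheme \<Rightarrow> (nat \<Rightarrow> 'm) \<Rightarrow> fm \<Rightarrow> 'm" where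
  "eval A \<gamma> (Var x) = \<gamma> x"
| "eval A \<gamma> Bot = fbot A"
| "eval A \<gamma> (And p q) = fwedge A (eval A \<gamma> p) (eval A \<gamma> q)"
| "eval A \<gamma> (Or p q) = fvee A (eval A \<gamma> p) (eval A \<gamma> q)"
| "eval A \<gamma> (Imp p q) = fimp A (eval A \<gamma> p) (eval A \<gamma> q)"
| "eval A \<gamma> (Box p) = fbox A (eval A \<gamma> p)"

definition msat :: "('m, 'z) L5model_scheme \<Rightarrow> (nat \<Rightarrow> 'm) \<Rightarrow> fm \<Rightarrow> bool" where
  "msat A \<gamma> p \<longleftrightarrow> eval A \<gamma> p \<in> TRUE A"

definition L5_frame :: "'w set \<Rightarrow> ('w \<Rightarrow> 'w \<Rightarrow> bool) \<Rightarrow> bool" where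
  "L5_frame W R \<longleftrightarrow> W \<noteq> {} \<and>
     (\<forall>w\<in>W. R w w) \<and>
     (\<forall>u\<in>W. \<forall>v\<in>W. \<forall>w\<in>W. R u v \<and> R v w \<longrightarrow> R u w) \<and>
     (\<forall>u\<in>W. \<forall>v\<in>W. R u v \<and> R v u \<longrightarrow> u = v) \<and>
     (\<exists>b\<in>W. \<forall>w\<in>W. R b w) \<and>
     (\<forall>C\<subseteq>W. (\<forall>u\<in>C. \<forall>v\<in>C. R u v \<or> R v u) \<longrightarrow> (\<exists>ub\<in>W. \<forall>c\<in>C. R c ub))"

text \<open>The R-smallest world w_B (unique by antisymmetry).\<close>
definition wB :: "'w set \<Rightarrow> ('w \<Rightarrow> 'w \<Rightarrow> bool) \<Rightarrow> 'w" where
  "wB W R = (THE b. b \<in> W \<and> (\<forall>w\<in>W. R b w))"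

definition frame_assignment :: "'w set \<Rightarrow> ('w \<Rightarrow> 'w \<Rightarrow> bool) \<Rightarrow> (nat \<Rightarrow> 'w set) \<Rightarrow> bool" where
  "frame_assignment W R g \<longleftrightarrow>
     (\<forall>x. g x \<subseteq> W \<and> (\<forall>w\<in>W. \<forall>w'\<in>W. R w w' \<and> w \<in> g x \<longrightarrow> w' \<in> g x))"

definition R_maximal :: "'w set \<Rightarrow> ('w \<Rightarrow> 'w \<Rightarrow> bool) \<Rightarrow> 'w \<Rightarrow> bool" where
  "R_maximal W R w \<longleftrightarrow> w \<in> W \<and> (\<forall>w'\<in>W. R w w' \<longrightarrow> w' = w)"

primrec ksat :: "'w set \<Rightarrow> ('w \<Rightarrow> 'w \<Rightarrow> bool) \<Rightarrow> (nat \<Rightarrow> 'w set) \<Rightarrow> 'w \<Rightarrow> fm \<Rightarrow> bool" where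
  "ksat W R g w (Var x) = (w \<in> g x)"
| "ksat W R g w Bot = False"
| "ksat W R g w (And p q) = (ksat W R g w p \<and> ksat W R g w q)"
| "ksat W R g w (Or p q) = (ksat W R g w p \<or> ksat W R g w q)"
| "ksat W R g w (Imp p q) =
     (\<forall>w'\<in>W. R w w' \<longrightarrow> ksat W R g w' p \<longrightarrow> ksat W R g w' q)"
| "ksat W R g w (Box p) = ksat W R g (wB W R) p"

end

theory Submission imports Defs begin

locale HA =
  fixes A :: "('m, 'z) L5model_scheme"
  assumes ha: "heyting_algebra A"
begin

abbreviation "M \<equiv> carrier A"
abbreviation "mt \<equiv> fwedge A"
abbreviation "jn \<equiv> fvee A"
abbreviation "im \<equiv> fimp A"
abbreviation "lq \<equiv> le A"

lemma bot_in[simp]: "fbot A \<in> M" and top_in[simp]: "ftop A \<in> M"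
  using ha unfolding heyting_algebra_def Let_def by auto
lemma cl[simp]: "a \<in> M \<Longrightarrow> b \<in> M \<Longrightarrow> im a b \<in> M \<and> jn a b \<in> M \<and> mt a b \<in> M"
  using ha unfolding heyting_algebra_def Let_def by auto
lemma assoc: "a \<in> M \<Longrightarrow> b \<in> M \<Longrightarrow> c \<in> M \<Longrightarrow> mt (mt a b) c = mt a (mt b c) \<and> jn (jn a b) c = jn a (jn b c)"
  using ha unfolding heyting_algebra_def Let_def by auto
lemma assoc_m: "a \<in> M \<Longrightarrow> b \<in> M \<Longrightarrow> c \<in> M \<Longrightarrow> mt (mt a b) c = mt a (mt b c)" using assoc by blast
lemma assoc_j: "a \<in> M \<Longrightarrow> b \<in> M \<Longrightarrow> c \<in> M \<Longrightarrow> jn (jn a b) c = jn a (jn b c)" using assoc by blast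
lemma comm: "a \<in> M \<Longrightarrow> b \<in> M \<Longrightarrow> mt a b = mt b a \<and> jn a b = jn b a"
  using ha unfolding heyting_algebra_def Let_def by auto
lemma absorb: "a \<in> M \<Longrightarrow> b \<in> M \<Longrightarrow> mt a (jn a b) = a \<and> jn a (mt a b) = a"
  using ha unfolding heyting_algebra_def Let_def by auto
lemma bot_le: "a \<in> M \<Longrightarrow> lq (fbot A) a" and le_top: "a \<in> M \<Longrightarrow> lq a (ftop A)"
  using ha unfolding heyting_algebra_def Let_def by auto
lemma resid: "a \<in> M \<Longrightarrow> b \<in> M \<Longrightarrow> c \<in> M \<Longrightarrow> lq c (im a b) \<longleftrightarrow> lq (mt c a) b"
  using ha unfolding heyting_algebra_def Let_def by auto

lemma idem: "a \<in> M \<Longrightarrow> mt a a = a \<and> jn a a = a"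
proof -
  assume a: "a \<in> M"
  have 1: "mt a a = a" using absorb[OF a cl[OF a a, THEN conjunct2, THEN conjunct2]] absorb[OF a a] by metis
  have "jn a a = a" using absorb[OF a cl[OF a a, THEN conjunct2, THEN conjunct1]] absorb[OF a a] by metis
  with 1 show ?thesis by simp
qed

lemma le_refl: "a \<in> M \<Longrightarrow> lq a a" by (simp add: le_def idem)
lemma le_antisym: "a \<in> M \<Longrightarrow> b \<in> M \<Longrightarrow> lq a b \<Longrightarrow> lq b a \<Longrightarrow> a = b"
  unfolding le_def using comm by metis
lemma le_trans: "a \<in> M \<Longrightarrow> b \<in> M \<Longrightarrow> c \<in> M \<Longrightarrow> lq a b \<Longrightarrow> lq b c \<Longrightarrow> lq a c"
  unfolding le_def using assoc by metis
lemma meet_le1: "a \<in> M \<Longrightarrow> b \<in> M \<Longrightarrow> lq (mt a b) a"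
  unfolding le_def by (metis assoc comm idem)
lemma meet_le2: "a \<in> M \<Longrightarrow> b \<in> M \<Longrightarrow> lq (mt a b) b"
  unfolding le_def by (metis assoc idem)
lemma le_meet: "a \<in> M \<Longrightarrow> b \<in> M \<Longrightarrow> c \<in> M \<Longrightarrow> lq c a \<Longrightarrow> lq c b \<Longrightarrow> lq c (mt a b)"
  unfolding le_def by (metis assoc)
lemma le_join_iff: "a \<in> M \<Longrightarrow> b \<in> M \<Longrightarrow> lq a b \<longleftrightarrow> jn a b = b"
  unfolding le_def by (metis absorb comm)
lemma join_ge1: "a \<in> M \<Longrightarrow> b \<in> M \<Longrightarrow> lq a (jn a b)"
  by (simp add: le_join_iff assoc_j[symmetric] idem)
lemma join_ge2: "a \<in> M \<Longrightarrow> b \<in> M \<Longrightarrow> lq b (jn a b)"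
  by (metis comm join_ge1)
lemma join_le: "a \<in> M \<Longrightarrow> b \<in> M \<Longrightarrow> c \<in> M \<Longrightarrow> lq a c \<Longrightarrow> lq b c \<Longrightarrow> lq (jn a b) c"
  by (simp add: le_join_iff assoc_j)
lemma mp_le: "a \<in> M \<Longrightarrow> b \<in> M \<Longrightarrow> lq (mt (im a b) a) b"
  using resid[of a b "im a b"] le_refl by simp
lemma distrib: "q \<in> M \<Longrightarrow> x \<in> M \<Longrightarrow> y \<in> M \<Longrightarrow> lq (mt q (jn x y)) (jn (mt q x) (mt q y))"
proof -
  assume q: "q \<in> M" and x: "x \<in> M" and y: "y \<in> M"
  define r where "r = jn (mt q x) (mt q y)"
  have r: "r \<in> M" using q x y by (simp add: r_def)
  have "lq (mt x q) r" using comm[OF q x] join_ge1[of "mt q x" "mt q y"] q x y r_def by simp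
  hence 1: "lq x (im q r)" using resid q x r by simp
  have "lq (mt y q) r" using comm[OF q y] join_ge2[of "mt q x" "mt q y"] q x y r_def by simp
  hence 2: "lq y (im q r)" using resid q y r by simp
  have "lq (jn x y) (im q r)" using join_le[OF x y _ 1 2] q r by simp
  hence "lq (mt (jn x y) q) r" using resid q r x y by simp
  thus ?thesis using comm[of q "jn x y"] q x y r_def by simp
qed

definition prime_f :: "'m set \<Rightarrow> bool" where
  "prime_f F \<longleftrightarrow> proper_filter A F \<and> (\<forall>x\<in>M. \<forall>y\<in>M. jn x y \<in> F \<longrightarrow> x \<in> F \<or> y \<in> F)"
definition gen :: "'m set \<Rightarrow> 'm \<Rightarrow> 'm set" where
  "gen F x = {z\<in>M. \<exists>t\<in>F. lq (mt t x) z}"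

lemma f_sub: "is_filter A F \<Longrightarrow> a \<in> F \<Longrightarrow> a \<in> M" unfolding is_filter_def by blast
lemma f_up: "is_filter A F \<Longrightarrow> a \<in> F \<Longrightarrow> b \<in> M \<Longrightarrow> lq a b \<Longrightarrow> b \<in> F" unfolding is_filter_def by blast
lemma f_mt: "is_filter A F \<Longrightarrow> a \<in> F \<Longrightarrow> b \<in> F \<Longrightarrow> mt a b \<in> F" unfolding is_filter_def by blast
lemma f_top: "is_filter A F \<Longrightarrow> ftop A \<in> F"
proof -
  assume F: "is_filter A F"
  then obtain a where a: "a \<in> F" unfolding is_filter_def by blast
  hence "a \<in> M" using F f_sub by blast
  thus ?thesis using f_up[OF F a top_in] le_top by blast
qed
lemma f_mt_iff: "is_filter A F \<Longrightarrow> a \<in> M \<Longrightarrow> b \<in> M \<Longrightarrow> mt a b \<in> F \<longleftrightarrow> a \<in> F \<and> b \<in> F"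
proof -
  assume F: "is_filter A F" and a: "a \<in> M" and b: "b \<in> M"
  have "mt a b \<in> F \<Longrightarrow> a \<in> F" using f_up[OF F _ a] meet_le1[OF a b] by blast
  moreover have "mt a b \<in> F \<Longrightarrow> b \<in> F" using f_up[OF F _ b] meet_le2[OF a b] by blast
  ultimately show ?thesis using f_mt[OF F] by blast
qed
lemma mono_l: "a \<in> M \<Longrightarrow> b \<in> M \<Longrightarrow> c \<in> M \<Longrightarrow> lq a b \<Longrightarrow> lq (mt a c) (mt b c)"
  using le_meet[of b c "mt a c"] meet_le1[of a c] meet_le2[of a c] le_trans[of "mt a c" a b] by simp
lemma ml1: "a \<in> M \<Longrightarrow> b \<in> M \<Longrightarrow> c \<in> M \<Longrightarrow> lq (mt (mt a b) c) (mt a c)"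
  using mono_l[of "mt a b" a c] meet_le1[of a b] by simp
lemma ml2: "a \<in> M \<Longrightarrow> b \<in> M \<Longrightarrow> c \<in> M \<Longrightarrow> lq (mt (mt a b) c) (mt b c)"
  using mono_l[of "mt a b" b c] meet_le2[of a b] by simp

lemma gen_filter:
  assumes F: "is_filter A F" and x: "x \<in> M"
  shows "is_filter A (gen F x) \<and> F \<subseteq> gen F x \<and> x \<in> gen F x"
proof -
  have sub: "F \<subseteq> gen F x"
  proof
    fix a assume a: "a \<in> F"
    hence aM: "a \<in> M" using F f_sub by blast
    show "a \<in> gen F x" unfolding gen_def using a aM meet_le1[OF aM x] by blast
  qed
  have xin: "x \<in> gen F x"
    unfolding gen_def using x f_top[OF F] meet_le2[OF top_in x] by blast
  have up: "\<forall>a\<in>gen F x. \<forall>b\<in>M. lq a b \<longrightarrow> b \<in> gen F x"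
  proof (intro ballI impI)
    fix a b assume a: "a \<in> gen F x" and b: "b \<in> M" and ab: "lq a b"
    then obtain t where t: "t \<in> F" "lq (mt t x) a" and aM: "a \<in> M" unfolding gen_def by blast
    have "t \<in> M" using t F f_sub by blast
    hence "lq (mt t x) b" using le_trans[of "mt t x" a b] t aM b ab x by simp
    thus "b \<in> gen F x" unfolding gen_def using t b by blast
  qed
  have mtc: "\<forall>a\<in>gen F x. \<forall>b\<in>gen F x. mt a b \<in> gen F x"
  proof (intro ballI)
    fix a b assume a: "a \<in> gen F x" and b: "b \<in> gen F x"
    then obtain t1 t2 where t1: "t1 \<in> F" "lq (mt t1 x) a" and t2: "t2 \<in> F" "lq (mt t2 x) b"
      and aM: "a \<in> M" and bM: "b \<in> M" unfolding gen_def by blast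
    have t1M: "t1 \<in> M" and t2M: "t2 \<in> M" using t1 t2 F f_sub by auto
    have "lq (mt (mt t1 t2) x) (mt t1 x)"
      using ml1 t1M t2M x by simp
    hence 1: "lq (mt (mt t1 t2) x) a" using le_trans[of _ "mt t1 x" a] t1 t1M t2M x aM by simp
    have "lq (mt (mt t1 t2) x) (mt t2 x)"
      using ml2 t1M t2M x by simp
    hence 2: "lq (mt (mt t1 t2) x) b" using le_trans[of _ "mt t2 x" b] t2 t1M t2M x bM by simp
    have "lq (mt (mt t1 t2) x) (mt a b)" using le_meet[OF aM bM _ 1 2] cl t1M t2M x by simp
    moreover have "mt t1 t2 \<in> F" using F f_mt t1 t2 by blast
    ultimately show "mt a b \<in> gen F x" unfolding gen_def using aM bM by auto
  qed
  have "gen F x \<subseteq> M" unfolding gen_def by blast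
  thus ?thesis using sub xin up mtc unfolding is_filter_def by blast
qed

lemma chain_union:
  assumes "C \<noteq> {}" "\<forall>F\<in>C. is_filter A F" "\<forall>F\<in>C. \<forall>G\<in>C. F \<subseteq> G \<or> G \<subseteq> F"
  shows "is_filter A (\<Union>C)"
proof -
  have "\<forall>a\<in>\<Union>C. \<forall>b\<in>\<Union>C. mt a b \<in> \<Union>C"
  proof (intro ballI)
    fix a b assume "a \<in> \<Union>C" "b \<in> \<Union>C"
    then obtain F G where FG: "F \<in> C" "G \<in> C" "a \<in> F" "b \<in> G" by blast
    show "mt a b \<in> \<Union>C"
    proof (cases "F \<subseteq> G")
      case True
      hence "mt a b \<in> G" using f_mt[of G a b] assms(2) FG by blast
      thus ?thesis using FG by blast
    next
      case False
      hence "G \<subseteq> F" using assms(3) FG by blast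
      hence "mt a b \<in> F" using f_mt[of F a b] assms(2) FG by blast
      thus ?thesis using FG by blast
    qed
  qed
  moreover have "\<Union>C \<subseteq> M" using assms(2) f_sub by blast
  moreover have "\<Union>C \<noteq> {}" using assms(1,2) f_top by blast
  moreover have "\<forall>a\<in>\<Union>C. \<forall>b\<in>M. lq a b \<longrightarrow> b \<in> \<Union>C" using assms(2) f_up by blast
  ultimately show ?thesis unfolding is_filter_def by blast
qed

lemma prime_ext:
  assumes F: "is_filter A F" and b: "b \<in> M" "b \<notin> F"
  shows "\<exists>Q. prime_f Q \<and> F \<subseteq> Q \<and> b \<notin> Q"
proof -
  define S where "S = {Q. is_filter A Q \<and> F \<subseteq> Q \<and> b \<notin> Q}"
  have "\<forall>C\<in>chains S. \<exists>U\<in>S. \<forall>X\<in>C. X \<subseteq> U"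
  proof
    fix C assume C: "C \<in> chains S"
    show "\<exists>U\<in>S. \<forall>X\<in>C. X \<subseteq> U"
    proof (cases "C = {}")
      case True thus ?thesis using F b unfolding S_def by auto
    next
      case False
      have "is_filter A (\<Union>C)" using chain_union[OF False] C
        unfolding chains_def chain_subset_def S_def by blast
      moreover have "F \<subseteq> \<Union>C" "b \<notin> \<Union>C" using False C unfolding chains_def S_def by auto
      ultimately show ?thesis unfolding S_def by blast
    qed
  qed
  then obtain Q where Q: "Q \<in> S" and mx: "\<forall>X\<in>S. Q \<subseteq> X \<longrightarrow> X = Q"
    using Zorn_Lemma2[of S] by blast
  have Qf: "is_filter A Q" and FQ: "F \<subseteq> Q" and bQ: "b \<notin> Q" using Q unfolding S_def by auto
  have key: "x \<in> M \<Longrightarrow> x \<notin> Q \<Longrightarrow> \<exists>t\<in>Q. lq (mt t x) b" for x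
  proof -
    assume x: "x \<in> M" "x \<notin> Q"
    have g: "is_filter A (gen Q x)" "Q \<subseteq> gen Q x" "x \<in> gen Q x" using gen_filter[OF Qf x(1)] by auto
    have "gen Q x \<notin> S" using mx g x(2) by blast
    hence "b \<in> gen Q x" using g FQ unfolding S_def by blast
    thus ?thesis unfolding gen_def by blast
  qed
  have pr: "\<forall>x\<in>M. \<forall>y\<in>M. jn x y \<in> Q \<longrightarrow> x \<in> Q \<or> y \<in> Q"
  proof (intro ballI impI; rule ccontr)
    fix x y assume x: "x \<in> M" and y: "y \<in> M" and j: "jn x y \<in> Q" and n: "\<not> (x \<in> Q \<or> y \<in> Q)"
    obtain t1 where t1: "t1 \<in> Q" "lq (mt t1 x) b" using key x n by blast
    obtain t2 where t2: "t2 \<in> Q" "lq (mt t2 y) b" using key y n by blast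
    have t1M: "t1 \<in> M" and t2M: "t2 \<in> M" using t1 t2 Qf f_sub by auto
    define q where "q = mt t1 t2"
    have qM: "q \<in> M" using q_def t1M t2M by simp
    have "lq (mt q x) (mt t1 x)"
      unfolding q_def using ml1 t1M t2M x by simp
    hence 1: "lq (mt q x) b" using le_trans[of _ "mt t1 x" b] t1 qM t1M x b by simp
    have "lq (mt q y) (mt t2 y)"
      unfolding q_def using ml2 t1M t2M y by simp
    hence 2: "lq (mt q y) b" using le_trans[of _ "mt t2 y" b] t2 qM t2M y b by simp
    have "lq (jn (mt q x) (mt q y)) b" using join_le 1 2 qM x y b cl by simp
    hence "lq (mt q (jn x y)) b" using distrib[OF qM x y] le_trans[of _ "jn (mt q x) (mt q y)" b] qM x y b by simp
    moreover have "mt q (jn x y) \<in> Q" using f_mt Qf j t1 t2 q_def by simp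
    ultimately have "b \<in> Q" using f_up Qf b by blast
    thus False using bQ by blast
  qed
  have "fbot A \<notin> Q" using bQ f_up[OF Qf _ b(1)] bot_le[OF b(1)] by blast
  hence "prime_f Q" using pr Qf unfolding prime_f_def proper_filter_def by blast
  thus ?thesis using FQ bQ by blast
qed

end

definition enc :: "'m set \<Rightarrow> (nat + 'm) set set" where
  "enc P = (\<lambda>m. {Inr m}) ` P"
definition dec :: "(nat + 'm) set set \<Rightarrow> 'm set" where
  "dec w = {m. {Inr m} \<in> w}"

lemma dec_enc[simp]: "dec (enc P) = P" unfolding enc_def dec_def by auto
lemma enc_sub[simp]: "enc P \<subseteq> enc Q \<longleftrightarrow> P \<subseteq> Q" unfolding enc_def by auto
lemma dec_mono: "w \<subseteq> w' \<Longrightarrow> dec w \<subseteq> dec w'" unfolding dec_def by auto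

lemma eval_in: "L5_model A \<Longrightarrow> \<forall>x. \<gamma> x \<in> carrier A \<Longrightarrow> eval A \<gamma> \<phi> \<in> carrier A"
proof -
  assume L: "L5_model A" and g: "\<forall>x. \<gamma> x \<in> carrier A"
  interpret HA A using L unfolding L5_model_def by unfold_locales blast
  have b: "\<And>m. m \<in> M \<Longrightarrow> fbox A m \<in> M" using L unfolding L5_model_def by blast
  show ?thesis
  proof (induction \<phi>)
    case (Var x) thus ?case using g by simp
  next
    case Bot thus ?case by simp
  next
    case (And p q) thus ?case using cl by simp
  next
    case (Or p q) thus ?case using cl by simp
  next
    case (Imp p q) thus ?case using cl by simp
  next
    case (Box p) thus ?case using b by simp
  qed
qed

theorem theorem5p2:
  fixes A :: "'m L5model" and \<gamma> :: "nat \<Rightarrow> 'm"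
  assumes "L5_model A"
      and "\<forall>x. \<gamma> x \<in> carrier A"
  shows "\<exists>(W :: (nat + 'm) set set set) R wT g.
           L5_frame W R \<and> R_maximal W R wT \<and> frame_assignment W R g \<and>
           (\<forall>\<phi>. msat A \<gamma> \<phi> \<longleftrightarrow> ksat W R g wT \<phi>)"
proof -
  note L = assms(1)
  interpret HA A using L unfolding L5_model_def by unfold_locales blast
  define T where "T = TRUE A"
  have Tu: "ultrafilter A T" using L unfolding L5_model_def T_def by blast
  have Tp: "proper_filter A T" using Tu unfolding ultrafilter_def by blast
  have Tf: "is_filter A T" and botT: "fbot A \<notin> T" using Tp unfolding proper_filter_def by auto
  have Tmax: "\<And>G. proper_filter A G \<Longrightarrow> T \<subseteq> G \<Longrightarrow> G = T" using Tu unfolding ultrafilter_def by blast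
  have boxM: "\<And>m. m \<in> M \<Longrightarrow> fbox A m \<in> M" using L unfolding L5_model_def by blast
  have ax: "\<forall>m\<in>carrier A. \<forall>m'\<in>carrier A. \<forall>m''\<in>carrier A.
        le A (fbox A m) m \<and>
        le A (fbox A (fimp A m m'))
             (fimp A (fbox A (fimp A m' m'')) (fbox A (fimp A m m''))) \<and>
        le A (fbox A (fvee A m m')) (fvee A (fbox A m) (fbox A m')) \<and>
        (fbox A m \<in> TRUE A \<longleftrightarrow> m = ftop A) \<and>
        fbox A m = (if m = ftop A then ftop A else fbot A)"
    using L unfolding L5_model_def by (elim conjE) assumption
  have boxv: "fbox A m = (if m = ftop A then ftop A else fbot A)" if "m \<in> M" for m
    using ax[rule_format, OF that that that] by blast
  have boxj: "lq (fbox A (jn m m')) (jn (fbox A m) (fbox A m'))" if "m \<in> M" "m' \<in> M" for m m'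
    using ax[rule_format, OF that(1) that(2) that(1)] by blast
  have topT: "ftop A \<in> T" using f_top[OF Tf] .
  have tb: "ftop A \<noteq> fbot A" using topT botT by auto
  have top_prime: "\<And>x y. x \<in> M \<Longrightarrow> y \<in> M \<Longrightarrow> jn x y = ftop A \<Longrightarrow> x = ftop A \<or> y = ftop A"
  proof (rule ccontr)
    fix x y assume x: "x \<in> M" and y: "y \<in> M" and j: "jn x y = ftop A" and n: "\<not> (x = ftop A \<or> y = ftop A)"
    have "lq (ftop A) (jn (fbot A) (fbot A))" using boxj[OF x y] j boxv x y n by simp
    hence "lq (ftop A) (fbot A)" using idem[of "fbot A"] by simp
    hence "ftop A = fbot A" using le_antisym[of "ftop A" "fbot A"] bot_le[of "ftop A"] by simp
    thus False using tb by simp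
  qed
  define B where "B = {ftop A}"
  have Bp: "prime_f B"
  proof -
    have "\<forall>a\<in>B. \<forall>b\<in>M. lq a b \<longrightarrow> b \<in> B"
      unfolding B_def using le_antisym[of "ftop A"] le_top by auto
    moreover have "mt (ftop A) (ftop A) = ftop A" using idem by simp
    ultimately have "is_filter A B" unfolding is_filter_def B_def by auto
    thus ?thesis unfolding prime_f_def proper_filter_def B_def using tb top_prime by auto
  qed
  have Tprime: "prime_f T"
  proof -
    obtain Q where Q: "prime_f Q" "T \<subseteq> Q" "fbot A \<notin> Q" using prime_ext[OF Tf bot_in botT] by blast
    hence "Q = T" using Tmax unfolding prime_f_def by blast
    thus ?thesis using Q by simp
  qed
  have pf: "\<And>P. prime_f P \<Longrightarrow> is_filter A P \<and> fbot A \<notin> P \<and> (\<forall>x\<in>M. \<forall>y\<in>M. jn x y \<in> P \<longrightarrow> x \<in> P \<or> y \<in> P)"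
    unfolding prime_f_def proper_filter_def by blast
  define W where "W = enc ` {P. prime_f P}"
  define R :: "(nat + 'm) set set \<Rightarrow> (nat + 'm) set set \<Rightarrow> bool" where "R = (\<subseteq>)"
  define wT where "wT = enc T"
  define g where "g x = {w \<in> W. \<gamma> x \<in> dec w}" for x
  have wW: "\<And>w. w \<in> W \<Longrightarrow> prime_f (dec w) \<and> w = enc (dec w)" unfolding W_def by auto
  have BW: "enc B \<in> W" using Bp unfolding W_def by blast
  have Bsub: "\<And>P. prime_f P \<Longrightarrow> B \<subseteq> P" unfolding B_def using pf f_top by blast
  have Bbot: "\<forall>w\<in>W. R (enc B) w"
  proof
    fix w assume "w \<in> W"
    hence "prime_f (dec w)" "w = enc (dec w)" using wW by auto
    thus "R (enc B) w" unfolding R_def using Bsub enc_sub by metis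
  qed
  have wBe: "wB W R = enc B"
    unfolding wB_def
  proof (rule the_equality)
    show "enc B \<in> W \<and> (\<forall>w\<in>W. R (enc B) w)" using BW Bbot by blast
  next
    fix b assume b: "b \<in> W \<and> (\<forall>w\<in>W. R b w)"
    hence "prime_f (dec b)" "b = enc (dec b)" using wW by auto
    hence "enc B \<subseteq> b" using Bsub enc_sub by metis
    moreover have "b \<subseteq> enc B" using b BW unfolding R_def by blast
    ultimately show "b = enc B" by blast
  qed
  have ev: "\<And>\<phi>. eval A \<gamma> \<phi> \<in> M" using eval_in[OF L assms(2)] .
  have truth: "\<forall>w\<in>W. ksat W R g w \<phi> \<longleftrightarrow> eval A \<gamma> \<phi> \<in> dec w" for \<phi>
  proof (induction \<phi>)
    case (Var x) thus ?case unfolding g_def by auto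
  next
    case Bot thus ?case using wW pf by auto
  next
    case (And p q) thus ?case using wW pf f_mt_iff ev by auto
  next
    case (Or p q)
    show ?case
    proof
      fix w assume w: "w \<in> W"
      have P: "prime_f (dec w)" using wW w by blast
      have F: "is_filter A (dec w)" using pf P by blast
      have "jn (eval A \<gamma> p) (eval A \<gamma> q) \<in> dec w \<longleftrightarrow> eval A \<gamma> p \<in> dec w \<or> eval A \<gamma> q \<in> dec w"
      proof
        assume "jn (eval A \<gamma> p) (eval A \<gamma> q) \<in> dec w"
        thus "eval A \<gamma> p \<in> dec w \<or> eval A \<gamma> q \<in> dec w" using pf[OF P] ev by blast
      next
        assume "eval A \<gamma> p \<in> dec w \<or> eval A \<gamma> q \<in> dec w"
        thus "jn (eval A \<gamma> p) (eval A \<gamma> q) \<in> dec w"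
          using f_up[OF F _ cl[OF ev ev, THEN conjunct2, THEN conjunct1]] join_ge1[OF ev ev] join_ge2[OF ev ev] by blast
      qed
      thus "ksat W R g w (Or p q) \<longleftrightarrow> eval A \<gamma> (Or p q) \<in> dec w" using Or w by simp
    qed
  next
    case (Imp p q)
    show ?case
    proof
      fix w assume w: "w \<in> W"
      define a where "a = eval A \<gamma> p"
      define b where "b = eval A \<gamma> q"
      have a: "a \<in> M" and b: "b \<in> M" using ev a_def b_def by auto
      define P where "P = dec w"
      have PP: "prime_f P" and we: "w = enc P" using wW w P_def by auto
      have F: "is_filter A P" using pf PP by blast
      have "ksat W R g w (Imp p q) \<longleftrightarrow> (\<forall>Q. prime_f Q \<longrightarrow> P \<subseteq> Q \<longrightarrow> a \<in> Q \<longrightarrow> b \<in> Q)"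
      proof -
        have "ksat W R g w (Imp p q) \<longleftrightarrow> (\<forall>w'\<in>W. w \<subseteq> w' \<longrightarrow> a \<in> dec w' \<longrightarrow> b \<in> dec w')"
          using Imp a_def b_def R_def by auto
        also have "\<dots> \<longleftrightarrow> (\<forall>Q. prime_f Q \<longrightarrow> P \<subseteq> Q \<longrightarrow> a \<in> Q \<longrightarrow> b \<in> Q)"
          unfolding W_def we by auto
        finally show ?thesis .
      qed
      also have "\<dots> \<longleftrightarrow> im a b \<in> P"
      proof
        assume H: "\<forall>Q. prime_f Q \<longrightarrow> P \<subseteq> Q \<longrightarrow> a \<in> Q \<longrightarrow> b \<in> Q"
        show "im a b \<in> P"
        proof (rule ccontr)
          assume n: "im a b \<notin> P"
          have G: "is_filter A (gen P a)" "P \<subseteq> gen P a" "a \<in> gen P a" using gen_filter[OF F a] by auto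
          have "b \<notin> gen P a"
          proof
            assume "b \<in> gen P a"
            then obtain t where t: "t \<in> P" "lq (mt t a) b" unfolding gen_def by blast
            have tM: "t \<in> M" using t F f_sub by blast
            have "lq t (im a b)" using resid[OF a b tM] t by simp
            hence "im a b \<in> P" using f_up[OF F t(1)] a b by simp
            thus False using n by simp
          qed
          then obtain Q where "prime_f Q" "gen P a \<subseteq> Q" "b \<notin> Q" using prime_ext[OF G(1) b] by blast
          thus False using H G by blast
        qed
      next
        assume i: "im a b \<in> P"
        show "\<forall>Q. prime_f Q \<longrightarrow> P \<subseteq> Q \<longrightarrow> a \<in> Q \<longrightarrow> b \<in> Q"
        proof (intro allI impI)
          fix Q assume Q: "prime_f Q" "P \<subseteq> Q" "a \<in> Q"
          have FQ: "is_filter A Q" using pf Q by blast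
          have "mt (im a b) a \<in> Q" using f_mt[OF FQ] Q i by blast
          thus "b \<in> Q" using f_up[OF FQ _ b] mp_le[OF a b] by blast
        qed
      qed
      finally show "ksat W R g w (Imp p q) \<longleftrightarrow> eval A \<gamma> (Imp p q) \<in> dec w"
        using a_def b_def P_def by simp
    qed
  next
    case (Box p)
    show ?case
    proof
      fix w assume w: "w \<in> W"
      have P: "prime_f (dec w)" using wW w by blast
      have "ksat W R g w (Box p) \<longleftrightarrow> eval A \<gamma> p = ftop A"
        using Box BW wBe unfolding B_def by simp
      moreover have "fbox A (eval A \<gamma> p) \<in> dec w \<longleftrightarrow> eval A \<gamma> p = ftop A"
        using boxv[OF ev] pf[OF P] f_top by auto
      ultimately show "ksat W R g w (Box p) \<longleftrightarrow> eval A \<gamma> (Box p) \<in> dec w" by simp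
    qed
  qed
  have frame: "L5_frame W R"
    unfolding L5_frame_def
  proof (intro conjI)
    show "W \<noteq> {}" using BW by blast
    show "\<forall>w\<in>W. R w w" unfolding R_def by blast
    show "\<forall>u\<in>W. \<forall>v\<in>W. \<forall>w\<in>W. R u v \<and> R v w \<longrightarrow> R u w" unfolding R_def by blast
    show "\<forall>u\<in>W. \<forall>v\<in>W. R u v \<and> R v u \<longrightarrow> u = v" unfolding R_def by blast
    show "\<exists>b\<in>W. \<forall>w\<in>W. R b w" using BW Bbot by blast
    show "\<forall>C\<subseteq>W. (\<forall>u\<in>C. \<forall>v\<in>C. R u v \<or> R v u) \<longrightarrow> (\<exists>ub\<in>W. \<forall>c\<in>C. R c ub)"
    proof (intro allI impI)
      fix C assume CW: "C \<subseteq> W" and ch: "\<forall>u\<in>C. \<forall>v\<in>C. R u v \<or> R v u"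
      show "\<exists>ub\<in>W. \<forall>c\<in>C. R c ub"
      proof (cases "C = {}")
        case True thus ?thesis using BW by blast
      next
        case False
        define D where "D = dec ` C"
        have Dp: "\<forall>P\<in>D. prime_f P"
        proof
          fix P assume "P \<in> D"
          then obtain c where "c \<in> C" "P = dec c" unfolding D_def by blast
          thus "prime_f P" using CW wW by blast
        qed
        have Dch: "\<forall>F\<in>D. \<forall>G\<in>D. F \<subseteq> G \<or> G \<subseteq> F"
        proof (intro ballI)
          fix F G assume "F \<in> D" "G \<in> D"
          then obtain c d where cd: "c \<in> C" "F = dec c" "d \<in> C" "G = dec d" unfolding D_def by blast
          hence "c \<subseteq> d \<or> d \<subseteq> c" using ch unfolding R_def by blast
          thus "F \<subseteq> G \<or> G \<subseteq> F" using cd dec_mono by blast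
        qed
        have Dne: "D \<noteq> {}" using False unfolding D_def by simp
        have Df: "\<forall>F\<in>D. is_filter A F" using Dp pf by blast
        have Uf: "is_filter A (\<Union>D)" using chain_union[OF Dne Df Dch] .
        have Ub: "fbot A \<notin> \<Union>D"
        proof
          assume "fbot A \<in> \<Union>D"
          then obtain P where "P \<in> D" "fbot A \<in> P" by blast
          thus False using Dp pf by blast
        qed
        have Upr: "\<forall>x\<in>M. \<forall>y\<in>M. jn x y \<in> \<Union>D \<longrightarrow> x \<in> \<Union>D \<or> y \<in> \<Union>D"
        proof (intro ballI impI)
          fix x y assume "x \<in> M" "y \<in> M" "jn x y \<in> \<Union>D"
          then obtain P where P: "P \<in> D" "jn x y \<in> P" "x \<in> M" "y \<in> M" by blast
          have "prime_f P" using Dp P by blast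
          hence "x \<in> P \<or> y \<in> P" using pf P by blast
          thus "x \<in> \<Union>D \<or> y \<in> \<Union>D" using P by blast
        qed
        have "prime_f (\<Union>D)" using Uf Ub Upr unfolding prime_f_def proper_filter_def by blast
        hence UW: "enc (\<Union>D) \<in> W" unfolding W_def by blast
        have "\<forall>c\<in>C. R c (enc (\<Union>D))"
        proof
          fix c assume c: "c \<in> C"
          have "c \<in> W" using c CW by blast
          hence e: "c = enc (dec c)" using wW by blast
          have "dec c \<subseteq> \<Union>D" using c unfolding D_def by blast
          hence "enc (dec c) \<subseteq> enc (\<Union>D)" by simp
          thus "R c (enc (\<Union>D))" unfolding R_def using e by simp
        qed
        thus ?thesis using UW by blast
      qed
    qed
  qed
  have TW: "wT \<in> W" unfolding wT_def W_def using Tprime by blast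
  have maxT: "R_maximal W R wT"
    unfolding R_maximal_def
  proof (intro conjI ballI impI)
    show "wT \<in> W" by (rule TW)
    fix w' assume w': "w' \<in> W" "R wT w'"
    have e: "w' = enc (dec w')" using wW w' by blast
    have "enc T \<subseteq> enc (dec w')" using w' e unfolding R_def wT_def by simp
    hence "T \<subseteq> dec w'" by simp
    hence "dec w' = T" using Tmax wW w' unfolding prime_f_def by blast
    thus "w' = wT" using e unfolding wT_def by simp
  qed
  have fa: "frame_assignment W R g"
    unfolding frame_assignment_def g_def R_def using dec_mono by blast
  have "\<forall>\<phi>. msat A \<gamma> \<phi> \<longleftrightarrow> ksat W R g wT \<phi>"
    using truth TW unfolding msat_def wT_def T_def by simp
  thus ?thesis using frame maxT fa by blast
qed

end
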